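(* Let $\phi\colon\mathbb{N}\to(0,\infty)$ be a function. (1) If $\sum_{n=1}^\infty\frac{1}{\phi(n)}<\infty$, then for Lebesgue almost all $x\in(0,1)$, $\limsup_{n\to\infty}\frac{R_n(x)}{\phi(n)}=0$. (2) If $\sum_{n=1}^\infty\frac{1}{\phi(n)}=\infty$, then for Lebesgue almost all $x\in(0,1)$, $\limsup_{n\to\infty}\frac{R_n(x)}{\phi(n)}=\infty$.
   Context: Signed Engel expansion: define $T\colon[0,1)\to[0,1)$ by: for $k\in\mathbb{N}$, $Tx=\lceil 1/x\rceil x-1$ if $x\in(\frac{1}{2k},\frac{1}{2k-1})$; $Tx=1-\lfloor 1/x\rfloor x$ if $x\in(\frac{1}{2k+1},\frac{1}{2k})$; $Tx=0$ if $x\in\{0\}\cup\{1/n\colon n\ge 2\}$. For $x\in(0,1)$, $d_1(x)=\lceil 1/x\rceil$ if $x\in[\frac{1}{2k},\frac{1}{2k-1})$ for some $k\in\mathbb{N}$, and $d_1(x)=\lfloor 1/x\rfloor$ if $x\in[\frac{1}{2k+1},\frac{1}{2k})$ for some $k\in\mathbb{N}$; $d_{n+1}(x)=d_1(T^nx)$ (defined for all $n$ when $x$ is irrational). For irrational $x\in(0,1)$, $R_1(x)=d_1(x)$ and $R_n(x)=d_n(x)/d_{n-1}(x)$ for $n\ge2$. *)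

theory Defs
  imports "HOL-Analysis.Analysis"
begin

definition sengel_T :: "real \<Rightarrow> real" where
  "sengel_T x =
     (if x = 0 \<or> (\<exists>n::nat. n \<ge> 2 \<and> x = 1 / real n) then 0
      else if (\<exists>k::nat. k \<ge> 1 \<and> 1 / real (2*k) < x \<and> x < 1 / real (2*k - 1))
        then real_of_int (ceiling (1 / x)) * x - 1
      else 1 - real_of_int (floor (1 / x)) * x)"

text \<open>First digit d_1, for x in (0,1): the intervals [1/(2k),1/(2k-1)) and
  [1/(2k+1),1/(2k)), k >= 1, partition (0,1).\<close>
definition sengel_d1 :: "real \<Rightarrow> real" where
  "sengel_d1 x =
     (if (\<exists>k::nat. k \<ge> 1 \<and> 1 / real (2*k) \<le> x \<and> x < 1 / real (2*k - 1))
      then real_of_int (ceiling (1 / x))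
      else real_of_int (floor (1 / x)))"

definition sengel_d :: "nat \<Rightarrow> real \<Rightarrow> real" where
  "sengel_d n x = sengel_d1 ((sengel_T ^^ (n - 1)) x)"

definition sengel_R :: "nat \<Rightarrow> real \<Rightarrow> real" where
  "sengel_R n x = (if n \<le> 1 then sengel_d 1 x else sengel_d n x / sengel_d (n - 1) x)"

end

theory Submission
  imports Defs
begin


definition Irr :: "real set" where "Irr = {0<..<1} - \<rat>"
definition Bk :: "nat \<Rightarrow> real set" where
  "Bk k = {1 / (2 * real k + 1) <..< 1 / (2 * real k - 1)}"
definition Kx :: "real \<Rightarrow> nat" where "Kx x = nat \<lfloor>(1 / x + 1) / 2\<rfloor>"

lemma Irr_inv: assumes "x \<in> Irr" shows "1 / x \<notin> \<rat>" "x \<notin> \<rat>" "0 < x" "x < 1"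
proof -
  show "x \<notin> \<rat>" "0 < x" "x < 1" using assms by (auto simp: Irr_def)
  show "1 / x \<notin> \<rat>"
  proof
    assume "1 / x \<in> \<rat>" then have "1 / (1/x) \<in> \<rat>" by (rule Rats_divide[OF Rats_1])
    with \<open>x \<notin> \<rat>\<close> show False by simp
  qed
qed

lemma half_ineq: fixes a y :: real shows "2*a - 1 < y \<longleftrightarrow> a < (y+1)/2" "y < 2*a+1 \<longleftrightarrow> (y+1)/2 < a + 1"
  by (auto simp: field_simps)

lemma Bk_iff: assumes "k \<ge> 1" "x > 0" shows "x \<in> Bk k \<longleftrightarrow> 2 * real k - 1 < 1/x \<and> 1/x < 2 * real k + 1"
proof -
  have p: "2 * real k - 1 > 0" using assms by simp
  show ?thesis using assms p
    by (auto simp: Bk_def field_simps)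
qed

lemma Kx_Bk: assumes "k \<ge> 1" "x \<in> Bk k" shows "Kx x = k"
proof -
  have "1 / (2 * real k + 1) > 0" by simp
  moreover have "x > 1 / (2 * real k + 1)" using assms by (simp add: Bk_def)
  ultimately have x0: "x > 0" by linarith
  have "2 * real k - 1 < 1/x \<and> 1/x < 2 * real k + 1" using Bk_iff assms x0 by blast
  then have "real k < (1/x + 1)/2" "(1/x + 1)/2 < real k + 1"
    using half_ineq by blast+
  then have "\<lfloor>(1 / x + 1) / 2\<rfloor> = int k" by (simp add: floor_eq_iff)
  then show ?thesis by (simp add: Kx_def)
qed

lemma Irr_Bk: assumes "x \<in> Irr" shows "Kx x \<ge> 1" "x \<in> Bk (Kx x)"
proof -
  note I = Irr_inv[OF assms]
  define f where "f = \<lfloor>(1 / x + 1) / 2\<rfloor>"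
  have "1/x > 1" using I by simp
  then have f1: "f \<ge> 1" by (simp add: f_def le_floor_iff)
  have ne: "(1/x + 1)/2 \<noteq> of_int f"
  proof
    assume "(1/x + 1)/2 = of_int f"
    then have "1/x = 2 * of_int f - 1" by simp
    then have "1/x \<in> \<rat>" by simp
    with I show False by simp
  qed
  have "of_int f \<le> (1/x + 1)/2" "(1/x + 1)/2 < of_int f + 1" unfolding f_def by linarith+
  with ne have a: "of_int f < (1/x + 1)/2" by linarith
  have K: "real (Kx x) = of_int f" using f1 by (simp add: Kx_def f_def)
  show "Kx x \<ge> 1" using f1 unfolding Kx_def f_def[symmetric] by linarith
  have "2 * real (Kx x) - 1 < 1/x \<and> 1/x < 2 * real (Kx x) + 1"
  proof -
    show ?thesis using a \<open>(1/x + 1)/2 < of_int f + 1\<close> K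
      using half_ineq by metis
  qed
  then show "x \<in> Bk (Kx x)" using Bk_iff[of "Kx x" x] I \<open>Kx x \<ge> 1\<close> by blast
qed

lemma inv_lt_iff: assumes "x > 0" "a > 0" shows "1/a < x \<longleftrightarrow> 1/x < (a::real)" "x < 1/a \<longleftrightarrow> a < 1/x"
  "1/a \<le> x \<longleftrightarrow> 1/x \<le> (a::real)"
  using assms by (auto simp: field_simps)

lemma T_L: assumes "k \<ge> 1" "1/(2*real k) < x" "x < 1/(2*real k - 1)"
  shows "sengel_T x = 2 * real k * x - 1"
proof -
  have "1/(2*real k) > 0" using assms by simp
  then have x0: "x > 0" using assms(2) by linarith
  have k1: "2 * real k - 1 > 0" using assms by simp
  have y1: "2 * real k - 1 < 1/x" "1/x < 2 * real k"
    using inv_lt_iff[OF x0, of "2 * real k - 1"] inv_lt_iff[OF x0, of "2 * real k"] assms k1 by auto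
  have n1: "\<not> (x = 0 \<or> (\<exists>n::nat. n \<ge> 2 \<and> x = 1 / real n))"
  proof
    assume "x = 0 \<or> (\<exists>n::nat. n \<ge> 2 \<and> x = 1 / real n)"
    then obtain n :: nat where "n \<ge> 2" "x = 1 / real n" using x0 by auto
    then have "1/x = real n" by simp
    with y1 have "2 * k - 1 < n" "n < 2 * k" by linarith+
    then show False by linarith
  qed
  have e: "\<exists>k'::nat. k' \<ge> 1 \<and> 1 / real (2*k') < x \<and> x < 1 / real (2*k' - 1)"
    using assms by (intro exI[of _ k]) (auto simp: of_nat_diff)
  have c: "\<lceil>1/x\<rceil> = 2 * int k"
    using y1 by (simp add: ceiling_eq_iff)
  show ?thesis unfolding sengel_T_def
    by (subst if_not_P[OF n1], subst if_P[OF e]) (simp add: c)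
qed

lemma T_R: assumes "k \<ge> 1" "1/(2*real k + 1) < x" "x < 1/(2*real k)"
  shows "sengel_T x = 1 - 2 * real k * x"
proof -
  have "1/(2*real k + 1) > 0" using assms by simp
  then have x0: "x > 0" using assms(2) by linarith
  have y1: "2 * real k < 1/x" "1/x < 2 * real k + 1"
    using inv_lt_iff[OF x0, of "2 * real k + 1"] inv_lt_iff[OF x0, of "2 * real k"] assms by auto
  have n1: "\<not> (x = 0 \<or> (\<exists>n::nat. n \<ge> 2 \<and> x = 1 / real n))"
  proof
    assume "x = 0 \<or> (\<exists>n::nat. n \<ge> 2 \<and> x = 1 / real n)"
    then obtain n :: nat where "n \<ge> 2" "x = 1 / real n" using x0 by auto
    then have "1/x = real n" by simp
    with y1 have "2 * k < n" "n < 2 * k + 1" by linarith+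
    then show False by linarith
  qed
  have e: "\<not> (\<exists>k'::nat. k' \<ge> 1 \<and> 1 / real (2*k') < x \<and> x < 1 / real (2*k' - 1))"
  proof
    assume "\<exists>k'::nat. k' \<ge> 1 \<and> 1 / real (2*k') < x \<and> x < 1 / real (2*k' - 1)"
    then obtain k' :: nat where k': "k' \<ge> 1" "1 / real (2*k') < x" "x < 1 / real (2*k' - 1)" by blast
    have "2 * real k' - 1 > 0" using k' by simp
    then have "2 * real k' - 1 < 1/x" "1/x < 2 * real k'"
      using inv_lt_iff[OF x0, of "2 * real k' - 1"] inv_lt_iff[OF x0, of "2 * real k'"] k'
      by (auto simp: of_nat_diff)
    with y1 have "2*k < 2*k'" "2*k'-1 < 2*k+1" by linarith+
    then show False by arith
  qed
  have c: "\<lfloor>1/x\<rfloor> = 2 * int k"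
    using y1 by (simp add: floor_eq_iff)
  show ?thesis unfolding sengel_T_def
    by (subst if_not_P[OF n1], subst if_not_P[OF e]) (simp add: c)
qed

lemma T_mid: assumes "k \<ge> 1" shows "sengel_T (1/(2*real k)) = 0"
proof -
  have "\<exists>n::nat. n \<ge> 2 \<and> 1/(2*real k) = 1 / real n"
    using assms by (intro exI[of _ "2*k"]) auto
  then show ?thesis unfolding sengel_T_def by auto
qed

lemma d1_Irr: assumes "x \<in> Irr" shows "sengel_d1 x = 2 * real (Kx x)"
proof -
  note I = Irr_inv[OF assms]
  define k where "k = Kx x"
  have k1: "k \<ge> 1" and B: "x \<in> Bk k" using Irr_Bk[OF assms] k_def by auto
  have y: "2 * real k - 1 < 1/x" "1/x < 2 * real k + 1" using Bk_iff[OF k1 I(3)] B by auto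
  have ne: "1/x \<noteq> 2 * real k" using I(1) by (metis Rats_of_nat of_nat_mult of_nat_numeral)
  show ?thesis
  proof (cases "1/x < 2 * real k")
    case True
    have e: "\<exists>k'::nat. k' \<ge> 1 \<and> 1 / real (2*k') \<le> x \<and> x < 1 / real (2*k' - 1)"
      using k1 True y inv_lt_iff[OF I(3), of "2 * real k - 1"] inv_lt_iff[OF I(3), of "2 * real k"]
      by (intro exI[of _ k]) (auto simp: of_nat_diff)
    have c: "\<lceil>1/x\<rceil> = 2 * int k"
      using y True by (simp add: ceiling_eq_iff)
    show ?thesis unfolding sengel_d1_def k_def[symmetric]
      by (subst if_P[OF e]) (simp add: c)
  next
    case False
    with ne have F: "2 * real k < 1/x" by linarith
    have e: "\<not> (\<exists>k'::nat. k' \<ge> 1 \<and> 1 / real (2*k') \<le> x \<and> x < 1 / real (2*k' - 1))"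
    proof
      assume "\<exists>k'::nat. k' \<ge> 1 \<and> 1 / real (2*k') \<le> x \<and> x < 1 / real (2*k' - 1)"
      then obtain k' :: nat where k': "k' \<ge> 1" "1 / real (2*k') \<le> x" "x < 1 / real (2*k' - 1)" by blast
      have "2 * real k' - 1 > 0" using k' by simp
      then have "2 * real k' - 1 < 1/x" "1/x \<le> 2 * real k'"
        using inv_lt_iff[OF I(3), of "2 * real k' - 1"] inv_lt_iff[OF I(3), of "2 * real k'"] k'
        by (auto simp: of_nat_diff)
      with y F have "2*k < 2*k'" "2*k'-1 < 2*k+1" by linarith+
      then show False by arith
    qed
    have c: "\<lfloor>1/x\<rfloor> = 2 * int k"
      using y F by (simp add: floor_eq_iff)
    show ?thesis unfolding sengel_d1_def k_def[symmetric]
      by (subst if_not_P[OF e]) (simp add: c)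
  qed
qed



lemma Rats_null: "\<rat> \<in> null_sets lborel"
  by (intro countable_imp_null_set_lborel countable_rat)

lemma Rats_borel[measurable]: "(\<rat> :: real set) \<in> sets borel"
  using Rats_null by (auto simp: null_sets_def)

lemma Irr_borel[measurable]: "Irr \<in> sets borel"
  unfolding Irr_def by measurable

lemma Bk_borel[measurable]: "Bk k \<in> sets borel"
  unfolding Bk_def by simp

lemma T_Irr: assumes "x \<in> Irr" shows "sengel_T x \<in> Irr"
proof -
  note I = Irr_inv[OF assms]
  define k where "k = Kx x"
  have k1: "k \<ge> 1" and B: "x \<in> Bk k" using Irr_Bk[OF assms] k_def by auto
  have y: "2 * real k - 1 < 1/x" "1/x < 2 * real k + 1" using Bk_iff[OF k1 I(3)] B by auto
  have ne: "1/x \<noteq> 2 * real k" using I(1) by (metis Rats_of_nat of_nat_mult of_nat_numeral)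
  have kp: "2 * real k - 1 > 0" using k1 by simp
  show ?thesis
  proof (cases "1/x < 2 * real k")
    case True
    then have a: "1/(2*real k) < x" "x < 1/(2*real k - 1)"
      using inv_lt_iff[OF I(3), of "2 * real k - 1"] inv_lt_iff[OF I(3), of "2 * real k"] y kp k1 by auto
    have T: "sengel_T x = 2 * real k * x - 1" using T_L[OF k1 a] .
    have "2 * real k * x > 1" using a(1) k1 by (simp add: field_simps)
    moreover have "2 * real k * x < 1 + 1/(2 * real k - 1)"
    proof -
      have "2 * real k * x < 2 * real k * (1/(2*real k - 1))"
        by (rule mult_strict_left_mono[OF a(2)]) (use k1 in simp)
      also have "\<dots> = 1 + 1/(2 * real k - 1)" using kp by (simp add: field_simps)
      finally show ?thesis .
    qed
    moreover have "1/(2 * real k - 1) \<le> 1" using k1 by simp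
    moreover have "2 * real k * x - 1 \<notin> \<rat>"
    proof
      assume "2 * real k * x - 1 \<in> \<rat>"
      then have "(2 * real k * x - 1 + 1) / (2 * real k) \<in> \<rat>" by (intro Rats_divide Rats_add) auto
      with k1 I(2) show False by simp
    qed
    ultimately show ?thesis unfolding T Irr_def by auto
  next
    case False
    with ne have F: "2 * real k < 1/x" by linarith
    then have a: "1/(2*real k + 1) < x" "x < 1/(2*real k)"
      using inv_lt_iff[OF I(3), of "2 * real k + 1"] inv_lt_iff[OF I(3), of "2 * real k"] y k1 by auto
    have T: "sengel_T x = 1 - 2 * real k * x" using T_R[OF k1 a] .
    have "2 * real k * x < 1" using a(2) k1 by (simp add: field_simps)
    moreover have "2 * real k * x > 0" using k1 I by simp
    moreover have "1 - 2 * real k * x \<notin> \<rat>"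
    proof
      assume h: "1 - 2 * real k * x \<in> \<rat>"
      have "1 - (1 - 2 * real k * x) \<in> \<rat>" by (rule Rats_diff[OF Rats_1 h])
      then have "2 * real k * x \<in> \<rat>" by simp
      then have "2 * real k * x / (2 * real k) \<in> \<rat>" by (intro Rats_divide) auto
      with k1 I(2) show False by simp
    qed
    ultimately show ?thesis unfolding T Irr_def by auto
  qed
qed

lemma Tn_Irr: "x \<in> Irr \<Longrightarrow> (sengel_T ^^ n) x \<in> Irr"
  by (induction n) (auto simp: T_Irr)

lemma affine_meas:
  fixes c t :: real assumes c: "c \<noteq> 0" and A[measurable]: "A \<in> sets borel"
  shows "emeasure lborel {x. t + c * x \<in> A} = ennreal (1 / \<bar>c\<bar>) * emeasure lborel A"
proof -
  have "emeasure lborel A = emeasure (density (distr lborel borel (\<lambda>x. t + c * x)) (\<lambda>_. ennreal (abs c))) A"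
    using lborel_real_affine[OF c, of t] by simp
  also have "\<dots> = ennreal \<bar>c\<bar> * emeasure lborel {x. t + c * x \<in> A}"
    by (simp add: emeasure_density nn_integral_cmult_indicator emeasure_distr vimage_def)
  finally have e: "emeasure lborel A = ennreal \<bar>c\<bar> * emeasure lborel {x. t + c * x \<in> A}" .
  have "ennreal (1 / \<bar>c\<bar>) * emeasure lborel A = (ennreal (1 / \<bar>c\<bar>) * ennreal \<bar>c\<bar>) * emeasure lborel {x. t + c * x \<in> A}"
    by (simp add: e mult.assoc)
  also have "ennreal (1 / \<bar>c\<bar>) * ennreal \<bar>c\<bar> = 1"
    using c by (simp add: ennreal_mult[symmetric])
  finally show ?thesis by simp
qed

lemma Bk_disj: "disjoint_family Bk"
unfolding disjoint_family_on_def
proof (intro ballI impI)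
  fix i j :: nat assume "i \<noteq> j"
  show "Bk i \<inter> Bk j = {}"
  proof (rule ccontr)
    assume "Bk i \<inter> Bk j \<noteq> {}"
    then obtain y where y: "y \<in> Bk i" "y \<in> Bk j" by blast
    have "i \<ge> 1"
    proof (rule ccontr)
      assume "\<not> i \<ge> 1" then have "i = 0" by simp
      then show False using y by (simp add: Bk_def)
    qed
    moreover have "j \<ge> 1"
    proof (rule ccontr)
      assume "\<not> j \<ge> 1" then have "j = 0" by simp
      then show False using y by (simp add: Bk_def)
    qed
    ultimately have "Kx y = i" "Kx y = j" using Kx_Bk y by auto
    with \<open>i \<noteq> j\<close> show False by simp
  qed
qed

lemma Bk0: "Bk 0 = {}" by (simp add: Bk_def)

lemma decomp:
  assumes k: "k \<ge> 1" and S: "S \<subseteq> Irr" "S \<in> sets borel"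
  shows "emeasure lborel (S \<inter> {0<..<1 / (2 * real k - 1)}) = (\<Sum>j. of_bool (k \<le> j) * emeasure lborel (S \<inter> Bk j))"
proof -
  define A where "A j = (if k \<le> j then S \<inter> Bk j else {})" for j
  have Am: "A j \<in> sets borel" for j using S by (simp add: A_def)
  have U: "(\<Union>j. A j) = S \<inter> {0<..<1 / (2 * real k - 1)}"
  proof (intro equalityI subsetI)
    fix y assume "y \<in> (\<Union>j. A j)"
    then obtain j where "y \<in> A j" by blast
    then have j: "k \<le> j" "y \<in> S" "y \<in> Bk j" by (auto simp: A_def split: if_splits)
    have "1 / (2 * real j + 1) > 0" by simp
    moreover have "y > 1 / (2 * real j + 1)" using j by (simp add: Bk_def)
    ultimately have "0 < y" by linarith
    moreover have "1 / (2 * real j - 1) \<le> 1 / (2 * real k - 1)"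
      using j k by (intro divide_left_mono) auto
    moreover have "y < 1 / (2 * real j - 1)" using j by (simp add: Bk_def)
    ultimately show "y \<in> S \<inter> {0<..<1 / (2 * real k - 1)}" using j by simp
  next
    fix y assume "y \<in> S \<inter> {0<..<1 / (2 * real k - 1)}"
    then have y: "y \<in> S" "0 < y" "y < 1 / (2 * real k - 1)" by auto
    then have yI: "y \<in> Irr" using S by auto
    note B = Irr_Bk[OF yI]
    have "2 * real k - 1 > 0" using k by simp
    then have "2 * real k - 1 < 1 / y" using inv_lt_iff(2)[OF y(2), of "2 * real k - 1"] y by auto
    moreover have "1/y < 2 * real (Kx y) + 1" using Bk_iff[OF B(1) y(2)] B(2) by auto
    ultimately have "k \<le> Kx y" by linarith
    then show "y \<in> (\<Union>j. A j)" using y B by (auto simp: A_def)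
  qed
  have d: "disjoint_family A"
    using Bk_disj unfolding disjoint_family_on_def A_def by auto
  have "(\<Sum>j. emeasure lborel (A j)) = emeasure lborel (\<Union>j. A j)"
    by (rule suminf_emeasure) (use Am d in auto)
  moreover have "emeasure lborel (A j) = of_bool (k \<le> j) * emeasure lborel (S \<inter> Bk j)" for j
    by (simp add: A_def)
  ultimately show ?thesis using U by simp
qed



definition w :: "nat \<Rightarrow> nat \<Rightarrow> real" where
  "w k j = (of_bool (k \<le> j) + of_bool (k < j)) / (2 * real k)"

lemma L_iff: assumes "k \<ge> 1" shows
  "(1/(2*real k) < x \<and> x < 1/(2*real k - 1)) \<longleftrightarrow> (0 < 2*real k*x - 1 \<and> 2*real k*x - 1 < 1/(2*real k - 1))"
proof -
  have p: "2*real k - 1 > 0" "2 * real k > 0" using assms by auto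
  have a: "1/(2*real k) < x \<longleftrightarrow> 0 < 2*real k*x - 1" using p by (simp add: field_simps)
  have b: "x < 1/(2*real k - 1) \<longleftrightarrow> x * (2*real k - 1) < 1" using p by (simp add: field_simps)
  have c: "2*real k*x - 1 < 1/(2*real k - 1) \<longleftrightarrow> (2*real k*x - 1) * (2*real k - 1) < 1" using p by (simp add: field_simps)
  have d: "(2*real k*x - 1) * (2*real k - 1) < 1 \<longleftrightarrow> 2 * real k * (x * (2*real k - 1) - 1) < 0"
    by (simp add: algebra_simps)
  have e: "2 * real k * (x * (2*real k - 1) - 1) < 0 \<longleftrightarrow> x * (2*real k - 1) < 1"
    using p by (simp add: mult_less_0_iff)
  show ?thesis using a b c d e by blast
qed

lemma R_iff: assumes "k \<ge> 1" shows
  "(1/(2*real k + 1) < x \<and> x < 1/(2*real k)) \<longleftrightarrow> (0 < 1 - 2*real k*x \<and> 1 - 2*real k*x < 1/(2*real k + 1))"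
proof -
  have p: "2*real k + 1 > 0" "2 * real k > 0" using assms by auto
  have a: "x < 1/(2*real k) \<longleftrightarrow> 0 < 1 - 2*real k*x" using p by (simp add: field_simps)
  have b: "1/(2*real k + 1) < x \<longleftrightarrow> 1 < x * (2*real k + 1)" using p by (simp add: field_simps)
  have c: "1 - 2*real k*x < 1/(2*real k + 1) \<longleftrightarrow> (1 - 2*real k*x) * (2*real k + 1) < 1" using p by (simp add: field_simps)
  have d: "(1 - 2*real k*x) * (2*real k + 1) < 1 \<longleftrightarrow> 2 * real k * (1 - x * (2*real k + 1)) < 0"
    by (simp add: algebra_simps)
  have e: "2 * real k * (1 - x * (2*real k + 1)) < 0 \<longleftrightarrow> 1 < x * (2*real k + 1)"
    using p by (simp add: mult_less_0_iff)
  show ?thesis using a b c d e by blast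
qed

lemma T_Irr_cases: assumes "x \<in> Irr" "k = Kx x"
  shows "(1/(2*real k) < x \<and> x < 1/(2*real k - 1) \<and> sengel_T x = 2 * real k * x - 1) \<or>
         (1/(2*real k + 1) < x \<and> x < 1/(2*real k) \<and> sengel_T x = 1 - 2 * real k * x)"
proof -
  note I = Irr_inv[OF assms(1)]
  have k1: "k \<ge> 1" and B: "x \<in> Bk k" using Irr_Bk[OF assms(1)] assms(2) by auto
  have y: "2 * real k - 1 < 1/x" "1/x < 2 * real k + 1" using Bk_iff[OF k1 I(3)] B by auto
  have ne: "1/x \<noteq> 2 * real k" using I(1) by (metis Rats_of_nat of_nat_mult of_nat_numeral)
  have kp: "2 * real k - 1 > 0" using k1 by simp
  show ?thesis
  proof (cases "1/x < 2 * real k")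
    case True
    then have a: "1/(2*real k) < x" "x < 1/(2*real k - 1)"
      using inv_lt_iff[OF I(3), of "2 * real k - 1"] inv_lt_iff[OF I(3), of "2 * real k"] y kp k1 by auto
    then show ?thesis using T_L[OF k1 a] by blast
  next
    case False
    with ne have F: "2 * real k < 1/x" by linarith
    then have a: "1/(2*real k + 1) < x" "x < 1/(2*real k)"
      using inv_lt_iff[OF I(3), of "2 * real k + 1"] inv_lt_iff[OF I(3), of "2 * real k"] y k1 by auto
    then show ?thesis using T_R[OF k1 a] by blast
  qed
qed

lemma preimg:
  assumes k: "k \<ge> 1" and S: "S \<subseteq> Irr"
  shows "Irr \<inter> Bk k \<inter> sengel_T -` S =
    {x. -1 + (2 * real k) * x \<in> S \<inter> {0<..<1/(2*real k - 1)}} \<union>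
    {x. 1 + (- (2 * real k)) * x \<in> S \<inter> {0<..<1/(2*real k + 1)}}"
proof (intro equalityI subsetI)
  fix x assume x: "x \<in> Irr \<inter> Bk k \<inter> sengel_T -` S"
  then have K: "Kx x = k" using Kx_Bk k by auto
  from T_Irr_cases[OF _ K[symmetric]] x consider
    "1/(2*real k) < x \<and> x < 1/(2*real k - 1) \<and> sengel_T x = 2 * real k * x - 1" |
    "1/(2*real k + 1) < x \<and> x < 1/(2*real k) \<and> sengel_T x = 1 - 2 * real k * x" by blast
  then show "x \<in> {x. -1 + (2 * real k) * x \<in> S \<inter> {0<..<1/(2*real k - 1)}} \<union>
    {x. 1 + (- (2 * real k)) * x \<in> S \<inter> {0<..<1/(2*real k + 1)}}"
  proof cases
    case 1
    then have "0 < 2*real k*x - 1 \<and> 2*real k*x - 1 < 1/(2*real k - 1)" using L_iff[OF k] by blast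
    then show ?thesis using 1 x by auto
  next
    case 2
    then have "0 < 1 - 2*real k*x \<and> 1 - 2*real k*x < 1/(2*real k + 1)" using R_iff[OF k] by blast
    then show ?thesis using 2 x by auto
  qed
next
  fix x assume x: "x \<in> {x. -1 + (2 * real k) * x \<in> S \<inter> {0<..<1/(2*real k - 1)}} \<union>
    {x. 1 + (- (2 * real k)) * x \<in> S \<inter> {0<..<1/(2*real k + 1)}}"
  have kp: "2 * real k - 1 > 0" "2 * real k > 0" using k by auto
  have B1: "1/(2*real k + 1) < 1/(2*real k)" "1/(2*real k) < 1/(2*real k - 1)"
    using kp by (auto intro: divide_strict_left_mono)
  have notR: "x \<notin> \<rat>" if "c * x + d \<in> Irr" "c \<in> \<rat>" "d \<in> \<rat>" for c d
  proof
    assume "x \<in> \<rat>" then have "c * x + d \<in> \<rat>" using that by auto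
    with that(1) show False by (auto simp: Irr_def)
  qed
  from x show "x \<in> Irr \<inter> Bk k \<inter> sengel_T -` S"
  proof
    assume "x \<in> {x. -1 + (2 * real k) * x \<in> S \<inter> {0<..<1/(2*real k - 1)}}"
    then have h: "2*real k*x - 1 \<in> S" "0 < 2*real k*x - 1 \<and> 2*real k*x - 1 < 1/(2*real k - 1)" by auto
    then have a: "1/(2*real k) < x" "x < 1/(2*real k - 1)" using L_iff[OF k] by blast+
    have "x \<notin> \<rat>" using notR[of "2 * real k" "-1"] h S by auto
    moreover have "1/(2*real k - 1) \<le> 1" "0 < 1/(2*real k)" using k by auto
    ultimately have "x \<notin> \<rat>" "0 < x" "x < 1" using a by linarith+
    moreover have "x \<in> Bk k" using a B1 by (auto simp: Bk_def)
    moreover have "sengel_T x \<in> S" using T_L[OF k a] h by simp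
    ultimately show ?thesis by (auto simp: Irr_def)
  next
    assume "x \<in> {x. 1 + (- (2 * real k)) * x \<in> S \<inter> {0<..<1/(2*real k + 1)}}"
    then have h: "1 - 2*real k*x \<in> S" "0 < 1 - 2*real k*x \<and> 1 - 2*real k*x < 1/(2*real k + 1)" by auto
    then have a: "1/(2*real k + 1) < x" "x < 1/(2*real k)" using R_iff[OF k] by blast+
    have "x \<notin> \<rat>" using notR[of "- 2 * real k" "1"] h S by auto
    moreover have "0 < 1/(2*real k + 1)" by simp
    moreover have "1/(2*real k) < 1" using kp k by (simp add: field_simps)
    ultimately have "x \<notin> \<rat>" "0 < x" "x < 1" using a by linarith+
    moreover have "x \<in> Bk k" using a B1 by (auto simp: Bk_def)
    moreover have "sengel_T x \<in> S" using T_R[OF k a] h by simp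
    ultimately show ?thesis using a by (auto simp: Irr_def)
  qed
qed



lemma w_nonneg: "w k j \<ge> 0" by (simp add: w_def)

lemma w_term: "ennreal (1 / \<bar>2 * real k\<bar>) * (of_bool (k \<le> j) * m) + ennreal (1 / \<bar>- (2 * real k)\<bar>) * (of_bool (Suc k \<le> j) * m)
   = ennreal (w k j) * m"
proof -
  consider "j < k" | "j = k" | "k < j" by linarith
  then show ?thesis
  proof cases
    case 1 then show ?thesis by (simp add: w_def)
  next
    case 2 then show ?thesis by (simp add: w_def)
  next
    case 3
    then have "w k j = 1 / (2 * real k) + 1 / (2 * real k)" by (simp add: w_def field_simps)
    then have "ennreal (w k j) = ennreal (1 / (2 * real k)) + ennreal (1 / (2 * real k))"
      by (simp add: ennreal_plus[symmetric] del: ennreal_plus)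
    then show ?thesis using 3 by (simp add: distrib_right)
  qed
qed

lemma core:
  assumes k: "k \<ge> 1" and S: "S \<subseteq> Irr" and Sm[measurable]: "S \<in> sets borel"
  shows "Irr \<inter> Bk k \<inter> sengel_T -` S \<in> sets borel"
    "emeasure lborel (Irr \<inter> Bk k \<inter> sengel_T -` S) = (\<Sum>j. ennreal (w k j) * emeasure lborel (S \<inter> Bk j))"
proof -
  define A1 where "A1 = {x. -1 + (2 * real k) * x \<in> S \<inter> {0<..<1/(2*real k - 1)}}"
  define A2 where "A2 = {x. 1 + (- (2 * real k)) * x \<in> S \<inter> {0<..<1/(2*real k + 1)}}"
  have P: "Irr \<inter> Bk k \<inter> sengel_T -` S = A1 \<union> A2" using preimg[OF k S] by (simp add: A1_def A2_def)
  have m1[measurable]: "A1 \<in> sets borel" unfolding A1_def by measurable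
  have m2[measurable]: "A2 \<in> sets borel" unfolding A2_def by measurable
  show "Irr \<inter> Bk k \<inter> sengel_T -` S \<in> sets borel" unfolding P by simp
  have disj: "A1 \<inter> A2 = {}" unfolding A1_def A2_def by auto
  have kp: "2 * real k \<noteq> 0" using k by simp
  have e1: "emeasure lborel A1 = ennreal (1 / \<bar>2 * real k\<bar>) * emeasure lborel (S \<inter> {0<..<1/(2*real k - 1)})"
    unfolding A1_def by (rule affine_meas[OF kp]) simp
  have e2: "emeasure lborel A2 = ennreal (1 / \<bar>- (2 * real k)\<bar>) * emeasure lborel (S \<inter> {0<..<1/(2*real k + 1)})"
    unfolding A2_def by (rule affine_meas) (use kp in auto)
  have d1: "emeasure lborel (S \<inter> {0<..<1/(2*real k - 1)}) = (\<Sum>j. of_bool (k \<le> j) * emeasure lborel (S \<inter> Bk j))"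
    by (rule decomp[OF k S Sm])
  have d2: "emeasure lborel (S \<inter> {0<..<1/(2*real k + 1)}) = (\<Sum>j. of_bool (Suc k \<le> j) * emeasure lborel (S \<inter> Bk j))"
    using decomp[of "Suc k" S] S Sm by (simp add: algebra_simps)
  have "emeasure lborel (Irr \<inter> Bk k \<inter> sengel_T -` S) = emeasure lborel A1 + emeasure lborel A2"
    unfolding P by (rule plus_emeasure[symmetric]) (use disj in auto)
  also have "\<dots> = (\<Sum>j. ennreal (1 / \<bar>2 * real k\<bar>) * (of_bool (k \<le> j) * emeasure lborel (S \<inter> Bk j)))
     + (\<Sum>j. ennreal (1 / \<bar>- (2 * real k)\<bar>) * (of_bool (Suc k \<le> j) * emeasure lborel (S \<inter> Bk j)))"
    unfolding e1 e2 d1 d2 ennreal_suminf_cmult ..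
  also have "\<dots> = (\<Sum>j. ennreal (1 / \<bar>2 * real k\<bar>) * (of_bool (k \<le> j) * emeasure lborel (S \<inter> Bk j))
     + ennreal (1 / \<bar>- (2 * real k)\<bar>) * (of_bool (Suc k \<le> j) * emeasure lborel (S \<inter> Bk j)))"
    by (rule suminf_add) auto
  also have "\<dots> = (\<Sum>j. ennreal (w k j) * emeasure lborel (S \<inter> Bk j))"
    unfolding w_term ..
  finally show "emeasure lborel (Irr \<inter> Bk k \<inter> sengel_T -` S) = (\<Sum>j. ennreal (w k j) * emeasure lborel (S \<inter> Bk j))" .
qed



lemma ennsum_swap:
  fixes f :: "nat \<Rightarrow> nat \<Rightarrow> ennreal"
  shows "(\<Sum>i. \<Sum>j. f i j) = (\<Sum>j. \<Sum>i. f i j)"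
proof -
  interpret P: pair_sigma_finite "count_space (UNIV::nat set)" "count_space (UNIV::nat set)"
    by (intro pair_sigma_finite.intro sigma_finite_measure_count_space)
  have m: "case_prod f \<in> borel_measurable (count_space UNIV \<Otimes>\<^sub>M count_space UNIV)"
    by (simp add: pair_measure_countable)
  have "(\<integral>\<^sup>+ j. (\<integral>\<^sup>+ i. f i j \<partial>count_space UNIV) \<partial>count_space UNIV) = (\<integral>\<^sup>+ i. (\<integral>\<^sup>+ j. f i j \<partial>count_space UNIV) \<partial>count_space UNIV)"
    by (rule P.Fubini'[OF m])
  then show ?thesis by (simp add: nn_integral_count_space_nat)
qed

definition Pre :: "nat \<Rightarrow> real set \<Rightarrow> real set" where
  "Pre m S = {x \<in> Irr. (sengel_T ^^ m) x \<in> S}"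

definition H :: "(nat \<Rightarrow> nat \<Rightarrow> bool) \<Rightarrow> real set" where
  "H Q = {y \<in> Irr. Q (Kx y) (Kx (sengel_T y))}"

fun Ach :: "(nat \<Rightarrow> nat \<Rightarrow> nat \<Rightarrow> bool) \<Rightarrow> nat \<Rightarrow> real set" where
  "Ach Qs 0 = Irr"
| "Ach Qs (Suc m) = Ach Qs m \<inter> Pre m (H (Qs m))"

lemma Irr_UN: "Irr = (\<Union>k. Irr \<inter> Bk (Suc k))"
proof (intro equalityI subsetI)
  fix x assume x: "x \<in> Irr"
  then have "x \<in> Irr \<inter> Bk (Suc (Kx x - 1))" using Irr_Bk[OF x] by simp
  then show "x \<in> (\<Union>k. Irr \<inter> Bk (Suc k))" by blast
qed auto

lemma preT_meas:
  assumes "S \<subseteq> Irr" "S \<in> sets borel"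
  shows "Irr \<inter> sengel_T -` S \<in> sets borel"
proof -
  define F where "F k = Irr \<inter> Bk (Suc k) \<inter> sengel_T -` S" for k
  have eq: "Irr \<inter> sengel_T -` S = (\<Union>k. F k)"
    unfolding F_def by (subst Irr_UN) auto
  have "F k \<in> sets borel" for k
    using core(1)[of "Suc k" S] assms by (simp add: F_def)
  then show ?thesis unfolding eq by (intro sets.countable_UN) auto
qed

lemma Pre_Suc: "Pre (Suc m) S = Pre m (Irr \<inter> sengel_T -` S)"
  unfolding Pre_def using Tn_Irr by auto

lemma Pre_meas:
  assumes "S \<subseteq> Irr" "S \<in> sets borel"
  shows "Pre m S \<in> sets borel"
  using assms
proof (induction m arbitrary: S)
  case 0
  then show ?case by (simp add: Pre_def Collect_conj_eq)
next
  case (Suc m)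
  show ?case unfolding Pre_Suc
    by (rule Suc.IH) (use preT_meas[OF Suc.prems] in auto)
qed

lemma QIrr_meas: "{z \<in> Irr. P (Kx z)} \<in> sets borel"
proof -
  have "{z \<in> Irr. P (Kx z)} = (\<Union>j. if P j then Irr \<inter> Bk j else {})"
  proof (intro equalityI subsetI)
    fix z assume "z \<in> {z \<in> Irr. P (Kx z)}"
    then show "z \<in> (\<Union>j. if P j then Irr \<inter> Bk j else {})"
      using Irr_Bk[of z] by (intro UN_I[of "Kx z"]) auto
  next
    fix z assume "z \<in> (\<Union>j. if P j then Irr \<inter> Bk j else {})"
    then obtain j where "P j" "z \<in> Irr" "z \<in> Bk j" by (auto split: if_splits)
    moreover have "j \<ge> 1" using \<open>z \<in> Bk j\<close> Bk0 by (cases j) auto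
    ultimately show "z \<in> {z \<in> Irr. P (Kx z)}" using Kx_Bk by auto
  qed
  moreover have "(if P j then Irr \<inter> Bk j else {}) \<in> sets borel" for j by simp
  ultimately show ?thesis by simp
qed

lemma H_Bk:
  assumes k: "k \<ge> 1" and S: "S \<subseteq> Irr"
  shows "H Q \<inter> sengel_T -` S \<inter> Bk k = Irr \<inter> Bk k \<inter> sengel_T -` (S \<inter> {z \<in> Irr. Q k (Kx z)})"
  using Kx_Bk[OF k] S T_Irr unfolding H_def by auto

lemma H_meas: "H Q \<in> sets borel"
proof -
  define F where "F k = H Q \<inter> sengel_T -` Irr \<inter> Bk (Suc k)" for k
  have eq: "H Q = (\<Union>k. F k)"
    unfolding H_def F_def using T_Irr by (subst Irr_UN) auto
  have "F k \<in> sets borel" for k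
  proof -
    have "F k = Irr \<inter> Bk (Suc k) \<inter> sengel_T -` (Irr \<inter> {z \<in> Irr. Q (Suc k) (Kx z)})"
      unfolding F_def by (rule H_Bk) auto
    also have "\<dots> \<in> sets borel"
      by (rule core(1)) (auto intro: QIrr_meas)
    finally show ?thesis .
  qed
  then show ?thesis unfolding eq by (intro sets.countable_UN) auto
qed

lemma meas_restrict:
  assumes "S \<subseteq> Irr" "S \<in> sets borel"
  shows "emeasure lborel (S \<inter> {z \<in> Irr. P (Kx z)} \<inter> Bk j) = of_bool (P j) * emeasure lborel (S \<inter> Bk j)"
proof (cases "j = 0")
  case True then show ?thesis by (simp add: Bk0)
next
  case False
  then have "S \<inter> {z \<in> Irr. P (Kx z)} \<inter> Bk j = (if P j then S \<inter> Bk j else {})"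
    using Kx_Bk[of j] assms(1) by auto
  then show ?thesis by simp
qed

lemma invariant:
  "Ach Qs m \<subseteq> Irr \<and> Ach Qs m \<in> sets borel \<and>
   (\<exists>c. \<forall>S. S \<subseteq> Irr \<longrightarrow> S \<in> sets borel \<longrightarrow>
      emeasure lborel (Ach Qs m \<inter> Pre m S) = (\<Sum>k. c k * emeasure lborel (S \<inter> Bk k)))"
proof (induction m)
  case 0
  have "emeasure lborel (Irr \<inter> Pre 0 S) = (\<Sum>k. 1 * emeasure lborel (S \<inter> Bk k))"
    if S: "S \<subseteq> Irr" "S \<in> sets borel" for S
  proof -
    have "Irr \<inter> Pre 0 S = S \<inter> {0<..<1 / (2 * real (1::nat) - 1)}" using S by (auto simp: Pre_def Irr_def)
    then have "emeasure lborel (Irr \<inter> Pre 0 S) = (\<Sum>j. of_bool (1 \<le> j) * emeasure lborel (S \<inter> Bk j))"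
      using decomp[of 1 S] S by simp
    also have "\<dots> = (\<Sum>k. 1 * emeasure lborel (S \<inter> Bk k))"
      by (intro suminf_cong) (auto simp: Bk0 Suc_le_eq)
    finally show ?thesis .
  qed
  then show ?case by (auto intro!: exI[of _ "\<lambda>_. 1"])
next
  case (Suc m)
  from Suc.IH obtain c where sub: "Ach Qs m \<subseteq> Irr" and am: "Ach Qs m \<in> sets borel"
    and c: "\<And>S. S \<subseteq> Irr \<Longrightarrow> S \<in> sets borel \<Longrightarrow>
      emeasure lborel (Ach Qs m \<inter> Pre m S) = (\<Sum>k. c k * emeasure lborel (S \<inter> Bk k))" by blast
  define Q where "Q = Qs m"
  define c' where "c' j = (\<Sum>k. c k * (ennreal (w k j) * of_bool (Q k j)))" for j
  have "emeasure lborel (Ach Qs (Suc m) \<inter> Pre (Suc m) S) = (\<Sum>j. c' j * emeasure lborel (S \<inter> Bk j))"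
    if S: "S \<subseteq> Irr" "S \<in> sets borel" for S
  proof -
    have HS: "H Q \<inter> (Irr \<inter> sengel_T -` S) \<subseteq> Irr" "H Q \<inter> (Irr \<inter> sengel_T -` S) \<in> sets borel"
      using H_meas preT_meas[OF S] by auto
    have "Ach Qs (Suc m) \<inter> Pre (Suc m) S = Ach Qs m \<inter> Pre m (H Q \<inter> (Irr \<inter> sengel_T -` S))"
      by (auto simp: Pre_def Q_def Tn_Irr)
    then have "emeasure lborel (Ach Qs (Suc m) \<inter> Pre (Suc m) S) =
       (\<Sum>k. c k * emeasure lborel (H Q \<inter> (Irr \<inter> sengel_T -` S) \<inter> Bk k))"
      using c[OF HS] by simp
    also have "\<dots> = (\<Sum>k. \<Sum>j. c k * (ennreal (w k j) * of_bool (Q k j)) * emeasure lborel (S \<inter> Bk j))"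
    proof (intro suminf_cong)
      fix k
      show "c k * emeasure lborel (H Q \<inter> (Irr \<inter> sengel_T -` S) \<inter> Bk k) =
        (\<Sum>j. c k * (ennreal (w k j) * of_bool (Q k j)) * emeasure lborel (S \<inter> Bk j))"
      proof (cases "k = 0")
        case True then show ?thesis by (simp add: Bk0 w_def)
      next
        case False
        then have k: "k \<ge> 1" by simp
        have e: "H Q \<inter> (Irr \<inter> sengel_T -` S) \<inter> Bk k = Irr \<inter> Bk k \<inter> sengel_T -` (S \<inter> {z \<in> Irr. Q k (Kx z)})"
          using H_Bk[OF k S(1), of Q] S(1) unfolding H_def by auto
        have "emeasure lborel (H Q \<inter> (Irr \<inter> sengel_T -` S) \<inter> Bk k) =
          (\<Sum>j. ennreal (w k j) * emeasure lborel ((S \<inter> {z \<in> Irr. Q k (Kx z)}) \<inter> Bk j))"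
          unfolding e by (rule core(2)[OF k]) (use S QIrr_meas in auto)
        also have "\<dots> = (\<Sum>j. ennreal (w k j) * (of_bool (Q k j) * emeasure lborel (S \<inter> Bk j)))"
          using meas_restrict[OF S] by simp
        finally show ?thesis by (simp add: mult.assoc)
      qed
    qed
    also have "\<dots> = (\<Sum>j. \<Sum>k. c k * (ennreal (w k j) * of_bool (Q k j)) * emeasure lborel (S \<inter> Bk j))"
      by (rule ennsum_swap)
    also have "\<dots> = (\<Sum>j. c' j * emeasure lborel (S \<inter> Bk j))"
      unfolding c'_def by simp
    finally show ?thesis .
  qed
  moreover have "Ach Qs (Suc m) \<subseteq> Irr" using sub by auto
  moreover have "Pre m (H (Qs m)) \<in> sets borel"
    by (rule Pre_meas[OF _ H_meas]) (auto simp: H_def)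
  then have "Ach Qs (Suc m) \<in> sets borel"
    using am by simp
  ultimately show ?case by blast
qed



definition mB :: "nat \<Rightarrow> real" where
  "mB j = (if j = 0 then 0 else 1 / (2 * real j - 1) - 1 / (2 * real j + 1))"

lemma mB_nonneg: "mB j \<ge> 0"
  unfolding mB_def by (auto intro!: divide_left_mono)

lemma Bk_sub: "j \<ge> 1 \<Longrightarrow> Bk j \<subseteq> {0<..<1}"
proof
  fix x assume j: "j \<ge> 1" and x: "x \<in> Bk j"
  have "0 < 1 / (2 * real j + 1)" "1 / (2 * real j - 1) \<le> 1" using j by auto
  moreover have "1 / (2 * real j + 1) < x" "x < 1 / (2 * real j - 1)" using x by (auto simp: Bk_def)
  ultimately have "0 < x" "x < 1" by linarith+
  then show "x \<in> {0<..<1}" by simp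
qed

lemma meas_Bk: "emeasure lborel (Bk j) = ennreal (mB j)"
proof (cases "j = 0")
  case True then show ?thesis by (simp add: Bk0 mB_def)
next
  case False
  then have "1 / (2 * real j + 1) \<le> 1 / (2 * real j - 1)" by (intro divide_left_mono) auto
  then show ?thesis using False by (simp add: Bk_def mB_def)
qed

lemma meas_IrrBk: "emeasure lborel (Irr \<inter> Bk j) = ennreal (mB j)"
proof (cases "j = 0")
  case True then show ?thesis by (simp add: Bk0 mB_def)
next
  case False
  then have "Irr \<inter> Bk j = Bk j - \<rat>" using Bk_sub[of j] by (auto simp: Irr_def)
  then show ?thesis using emeasure_Diff_null_set[OF Rats_null, of "Bk j"] meas_Bk by simp
qed

lemma tail_sums:
  assumes J: "J \<ge> 1"
  shows "(\<lambda>j. of_bool (J \<le> j) * mB j) sums (1 / (2 * real J - 1))"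
proof -
  define g where "g i = 1 / (2 * real (i + J) - 1)" for i
  have g0: "g \<longlonglongrightarrow> 0"
  proof (rule Lim_null_comparison[OF _ LIMSEQ_inverse_real_of_nat])
    show "\<forall>\<^sub>F i in sequentially. norm (g i) \<le> inverse (real (Suc i))"
    proof (intro always_eventually allI)
      fix i
      have "real (Suc i) \<le> 2 * real (i + J) - 1" using J by simp
      moreover have "0 < real (Suc i)" by simp
      ultimately show "norm (g i) \<le> inverse (real (Suc i))"
        unfolding g_def using J by (simp add: divide_simps)
    qed
  qed
  have e: "mB (i + J) = g i - g (Suc i)" for i
    using J by (simp add: mB_def g_def algebra_simps)
  have "(\<lambda>i. g i - g (Suc i)) sums (g 0 - 0)" by (rule telescope_sums'[OF g0])
  then have "(\<lambda>i. of_bool (J \<le> i + J) * mB (i + J)) sums (1 / (2 * real J - 1))"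
    by (simp add: e g_def)
  then show ?thesis by (subst (asm) sums_iff_shift) simp
qed

lemma HQ_meas:
  assumes k: "k \<ge> 1"
  shows "emeasure lborel (H Q \<inter> Bk k) = (\<Sum>j. ennreal (w k j * of_bool (Q k j) * mB j))"
proof -
  have "H Q \<inter> Bk k = H Q \<inter> sengel_T -` Irr \<inter> Bk k"
    using T_Irr by (auto simp: H_def)
  also have "\<dots> = Irr \<inter> Bk k \<inter> sengel_T -` (Irr \<inter> {z \<in> Irr. Q k (Kx z)})"
    by (rule H_Bk[OF k]) simp
  finally have e: "H Q \<inter> Bk k = Irr \<inter> Bk k \<inter> sengel_T -` (Irr \<inter> {z \<in> Irr. Q k (Kx z)})" .
  have "emeasure lborel (H Q \<inter> Bk k) = (\<Sum>j. ennreal (w k j) * emeasure lborel ((Irr \<inter> {z \<in> Irr. Q k (Kx z)}) \<inter> Bk j))"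
    unfolding e by (rule core(2)[OF k]) (auto intro: QIrr_meas)
  also have "\<dots> = (\<Sum>j. ennreal (w k j) * (of_bool (Q k j) * ennreal (mB j)))"
    using meas_restrict[of Irr] meas_IrrBk by simp
  also have "\<dots> = (\<Sum>j. ennreal (w k j * of_bool (Q k j) * mB j))"
    by (intro suminf_cong) (auto simp: ennreal_mult w_nonneg mB_nonneg)
  finally show ?thesis .
qed


lemma alg_up:
  fixes k t u :: real
  assumes "k \<ge> 1" "t > 0" "u \<ge> k" "u > t * k"
  shows "(1/k) * (1/(2*u-1)) \<le> (4/t) * (1/(2*k-1) - 1/(2*k+1))"
proof -
  have e: "1/(2*k-1) - 1/(2*k+1) = 2 / ((2*k-1)*(2*k+1))" using assms by (simp add: field_simps)
  have p: "2*k-1 > 0" "2*u-1 > 0" "k > 0" using assms by auto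
  have key: "t * ((2*k-1)*(2*k+1)) \<le> 8 * k * (2*u-1)"
  proof (cases "t * k \<ge> 1")
    case True
    have "8 * k * (2*u-1) \<ge> 8 * k * (2*(t*k)-1)" using assms p by (intro mult_left_mono) auto
    moreover have "8 * k * (2*(t*k)-1) \<ge> t * ((2*k-1)*(2*k+1))"
    proof -
      have "8 * k * (2*(t*k)-1) - t * ((2*k-1)*(2*k+1)) = 12 * (t*k) * k - 8 * k + t"
        by (simp add: algebra_simps power2_eq_square)
      moreover have "12 * (t*k) * k \<ge> 12 * k" using True p by (simp add: mult_right_mono)
      ultimately show ?thesis using p assms by linarith
    qed
    ultimately show ?thesis by linarith
  next
    case False
    then have t1: "t < 1" using assms by (smt (verit) mult_le_cancel_left1)
    have "t * ((2*k-1)*(2*k+1)) \<le> 1 * ((2*k-1)*(2*k+1))" using t1 p by (intro mult_right_mono) auto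
    moreover have "8 * k * (2*u-1) \<ge> 8 * k * (2*k-1)" using assms p by (intro mult_left_mono) auto
    moreover have "(2*k-1)*(2*k+1) \<le> (2*k-1)*(8*k)" using p assms by (intro mult_left_mono) auto
    moreover have "(2*k-1)*(8*k) = 8 * k * (2*k-1)" by simp
    ultimately show ?thesis by (simp add: algebra_simps)
  qed
  have "(1/k) * (1/(2*u-1)) = 1 / (k * (2*u-1))" by simp
  also have "\<dots> \<le> 8 / (t * ((2*k-1)*(2*k+1)))"
    using key p assms by (simp add: divide_simps)
  also have "\<dots> = (4/t) * (2 / ((2*k-1)*(2*k+1)))" by simp
  finally show ?thesis unfolding e .
qed

lemma alg_lo:
  fixes k t u :: real
  assumes "k \<ge> 1" "t > 0" "u \<ge> 1" "u \<le> k + 1 \<or> u \<le> t * k + 1"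
  shows "(1/(4*(t+1))) * (1/(2*k-1) - 1/(2*k+1)) \<le> (1/k) * (1/(2*u-1))"
proof -
  have e: "1/(2*k-1) - 1/(2*k+1) = 2 / ((2*k-1)*(2*k+1))" using assms by (simp add: field_simps)
  have p: "2*k-1 > 0" "2*u-1 > 0" "k > 0" using assms by auto
  have key: "2 * (k * (2*u-1)) \<le> 4*(t+1) * ((2*k-1)*(2*k+1))"
  proof -
    have a: "4*(t+1) * ((2*k-1)*(2*k+1)) = 16*(t*k)*k + 16*k*k - 4*t - 4"
      by (simp add: algebra_simps)
    have "1 * 1 \<le> k * k" using assms by (intro mult_mono) auto
    then have b: "k * k \<ge> 1" by simp
    have "t * 1 \<le> t * (k * k)" using b assms by (intro mult_left_mono) auto
    then have c: "(t*k)*k \<ge> t" by (simp add: mult.assoc)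
    have "1 * k \<le> k * k" using assms by (intro mult_right_mono) auto
    then have d: "k * k \<ge> k" by simp
    consider "u \<le> k + 1" | "u \<le> t * k + 1" using assms by blast
    then show ?thesis
    proof cases
      case 1
      then have "2 * (k * (2*u-1)) \<le> 2 * (k * (2*k+1))" using p by (intro mult_left_mono) auto
      moreover have "2 * (k * (2*k+1)) = 4 * (k*k) + 2 * k" by (simp add: algebra_simps)
      ultimately show ?thesis unfolding a using b c d p \<open>t > 0\<close> by linarith
    next
      case 2
      then have "2 * (k * (2*u-1)) \<le> 2 * (k * (2*(t*k)+1))" using p by (intro mult_left_mono) auto
      moreover have "2 * (k * (2*(t*k)+1)) = 4 * ((t*k)*k) + 2 * k" by (simp add: algebra_simps)
      ultimately show ?thesis unfolding a using b c d p \<open>t > 0\<close> by linarith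
    qed
  qed
  have "(1/(4*(t+1))) * (2 / ((2*k-1)*(2*k+1))) = 2 / (4*(t+1) * ((2*k-1)*(2*k+1)))" by simp
  also have "\<dots> \<le> 1 / (k * (2*u-1))"
    using key p assms by (simp add: divide_simps)
  also have "\<dots> = (1/k) * (1/(2*u-1))" by simp
  finally show ?thesis unfolding e .
qed

lemma w_le: "k \<ge> 1 \<Longrightarrow> w k j \<le> 1 / real k"
  by (auto simp: w_def divide_simps)

lemma w_lt: "j < k \<Longrightarrow> w k j = 0"
  by (auto simp: w_def)

lemma w_gt: "k < j \<Longrightarrow> w k j = 1 / real k"
  by (auto simp: w_def)

lemma Xbounds:
  assumes k: "k \<ge> 1" and t: "t > 0"
  defines "f \<equiv> (\<lambda>j. w k j * of_bool (t * real k < real j) * mB j)"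
  shows "summable f" "(\<Sum>j. f j) \<le> 4 / t * mB k" "mB k / (4 * (t + 1)) \<le> (\<Sum>j. f j)"
proof -
  define n where "n = nat \<lfloor>t * real k\<rfloor>"
  have tk: "t * real k > 0" using k t by simp
  have n1: "real n \<le> t * real k" "t * real k < real n + 1" unfolding n_def using tk
    by (simp_all add: of_nat_nat)
  have f0: "f j \<ge> 0" for j unfolding f_def using w_nonneg mB_nonneg by simp
  define J1 where "J1 = max k (n + 1)"
  define J0 where "J0 = max (k + 1) (n + 1)"
  have J1: "J1 \<ge> 1" "J0 \<ge> 1" using k by (auto simp: J1_def J0_def)
  note s1 = tail_sums[OF J1(1)] and s0 = tail_sums[OF J1(2)]
  have le1: "f j \<le> (1 / real k) * (of_bool (J1 \<le> j) * mB j)" for j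
  proof (cases "k \<le> j \<and> t * real k < real j")
    case True
    then have "n + 1 \<le> j" using n1 by linarith
    then have "J1 \<le> j" using True by (simp add: J1_def)
    have "w k j * mB j \<le> (1 / real k) * mB j"
      using w_le[OF k, of j] mB_nonneg[of j] by (rule mult_right_mono)
    then show ?thesis using True \<open>J1 \<le> j\<close> unfolding f_def by simp
  next
    case False
    then have "f j = 0" unfolding f_def using w_lt[of j k] by auto
    then show ?thesis using mB_nonneg[of j] k by simp
  qed
  have le0: "(1 / real k) * (of_bool (J0 \<le> j) * mB j) \<le> f j" for j
  proof (cases "J0 \<le> j")
    case True
    then have "k < j" "n + 1 \<le> j" by (auto simp: J0_def)
    then have "t * real k < real j" using n1 by linarith
    then show ?thesis using True w_gt[OF \<open>k < j\<close>] unfolding f_def by simp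
  next
    case False
    then show ?thesis using f0[of j] by simp
  qed
  have sg1: "(\<lambda>j. (1 / real k) * (of_bool (J1 \<le> j) * mB j)) sums ((1 / real k) * (1 / (2 * real J1 - 1)))"
    by (rule sums_mult[OF s1])
  have sg0: "(\<lambda>j. (1 / real k) * (of_bool (J0 \<le> j) * mB j)) sums ((1 / real k) * (1 / (2 * real J0 - 1)))"
    by (rule sums_mult[OF s0])
  show sf: "summable f"
    by (rule summable_comparison_test[OF _ sums_summable[OF sg1]]) (use f0 le1 in auto)
  have mBk: "mB k = 1 / (2 * real k - 1) - 1 / (2 * real k + 1)" using k by (simp add: mB_def)
  have "(\<Sum>j. f j) \<le> (1 / real k) * (1 / (2 * real J1 - 1))"
    using suminf_le[OF le1 sf sums_summable[OF sg1]] sums_unique[OF sg1] by simp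
  also have "\<dots> \<le> 4 / t * mB k" unfolding mBk
    by (rule alg_up) (use k t n1 in \<open>auto simp: J1_def\<close>)
  finally show "(\<Sum>j. f j) \<le> 4 / t * mB k" .
  have "mB k / (4 * (t + 1)) = (1 / (4 * (t + 1))) * (1 / (2 * real k - 1) - 1 / (2 * real k + 1))"
    unfolding mBk by simp
  also have "\<dots> \<le> (1 / real k) * (1 / (2 * real J0 - 1))"
    by (rule alg_lo) (use k t n1 in \<open>auto simp: J0_def max_def\<close>)
  also have "\<dots> \<le> (\<Sum>j. f j)"
    using suminf_le[OF le0 sums_summable[OF sg0] sf] sums_unique[OF sg0] by simp
  finally show "mB k / (4 * (t + 1)) \<le> (\<Sum>j. f j)" .
qed



definition Qt :: "real \<Rightarrow> nat \<Rightarrow> nat \<Rightarrow> bool" where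
  "Qt t k j \<longleftrightarrow> t * real k < real j"

lemma H_sub: "H Q \<subseteq> Irr" by (auto simp: H_def)

lemma HQt_sum:
  assumes k: "k \<ge> 1" and t: "t > 0"
  shows "emeasure lborel (H (Qt t) \<inter> Bk k) = ennreal (\<Sum>j. w k j * of_bool (t * real k < real j) * mB j)"
proof -
  have "emeasure lborel (H (Qt t) \<inter> Bk k) = (\<Sum>j. ennreal (w k j * of_bool (t * real k < real j) * mB j))"
    using HQ_meas[OF k, of "Qt t"] by (simp add: Qt_def)
  also have "\<dots> = ennreal (\<Sum>j. w k j * of_bool (t * real k < real j) * mB j)"
    by (rule suminf_ennreal2) (use Xbounds(1)[OF k t] w_nonneg mB_nonneg in auto)
  finally show ?thesis .
qed

lemma HQt_le:
  assumes t: "t > 0"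
  shows "emeasure lborel (H (Qt t) \<inter> Bk k) \<le> ennreal (4 / t) * emeasure lborel (Irr \<inter> Bk k)"
proof (cases "k = 0")
  case True then show ?thesis by (simp add: Bk0)
next
  case False
  then have k: "k \<ge> 1" by simp
  have "emeasure lborel (H (Qt t) \<inter> Bk k) \<le> ennreal (4 / t * mB k)"
    unfolding HQt_sum[OF k t] using Xbounds(2)[OF k t] by (rule ennreal_leI)
  also have "\<dots> = ennreal (4 / t) * ennreal (mB k)"
    by (rule ennreal_mult) (use t mB_nonneg in auto)
  also have "\<dots> = ennreal (4 / t) * emeasure lborel (Irr \<inter> Bk k)"
    by (simp add: meas_IrrBk)
  finally show ?thesis .
qed

lemma HnQt_le:
  assumes t: "t > 0"
  shows "emeasure lborel (H (\<lambda>k j. \<not> Qt t k j) \<inter> Bk k) \<le> ennreal (1 - 1 / (4 * (t + 1))) * emeasure lborel (Irr \<inter> Bk k)"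
proof (cases "k = 0")
  case True then show ?thesis by (simp add: Bk0)
next
  case False
  then have k: "k \<ge> 1" by simp
  define X where "X = (\<Sum>j. w k j * of_bool (t * real k < real j) * mB j)"
  have X0: "X \<ge> 0" unfolding X_def
    by (rule suminf_nonneg[OF Xbounds(1)[OF k t]]) (use w_nonneg mB_nonneg in auto)
  have Xl: "mB k / (4 * (t + 1)) \<le> X" unfolding X_def by (rule Xbounds(3)[OF k t])
  have eq: "H (\<lambda>k j. \<not> Qt t k j) \<inter> Bk k = (Irr \<inter> Bk k) - (H (Qt t) \<inter> Bk k)"
    by (auto simp: H_def)
  have "emeasure lborel (H (\<lambda>k j. \<not> Qt t k j) \<inter> Bk k) = emeasure lborel (Irr \<inter> Bk k) - emeasure lborel (H (Qt t) \<inter> Bk k)"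
    unfolding eq
  proof (rule emeasure_Diff)
    show "emeasure lborel (H (Qt t) \<inter> Bk k) \<noteq> \<infinity>" unfolding HQt_sum[OF k t] by simp
    show "Irr \<inter> Bk k \<in> sets lborel" by simp
    show "H (Qt t) \<inter> Bk k \<in> sets lborel" using H_meas by simp
    show "H (Qt t) \<inter> Bk k \<subseteq> Irr \<inter> Bk k" using H_sub by blast
  qed
  also have "\<dots> = ennreal (mB k - X)"
    unfolding meas_IrrBk HQt_sum[OF k t] X_def[symmetric] using X0 by (simp add: ennreal_minus)
  also have "\<dots> \<le> ennreal ((1 - 1 / (4 * (t + 1))) * mB k)"
    using Xl by (intro ennreal_leI) (simp add: algebra_simps)
  also have "\<dots> = ennreal (1 - 1 / (4 * (t + 1))) * emeasure lborel (Irr \<inter> Bk k)"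
  proof -
    have "1 / (4 * (t + 1)) \<le> 1" using t by (simp add: field_simps)
    then have "ennreal ((1 - 1 / (4 * (t + 1))) * mB k) = ennreal (1 - 1 / (4 * (t + 1))) * ennreal (mB k)"
      by (intro ennreal_mult) (use mB_nonneg in auto)
    then show ?thesis by (simp add: meas_IrrBk)
  qed
  finally show ?thesis .
qed

lemma H_True: "H (\<lambda>_ _. True) = Irr"
  by (auto simp: H_def)

lemma Pre_Irr: "Pre m Irr = Irr"
  using Tn_Irr by (auto simp: Pre_def)

lemma chain_step:
  assumes r: "\<And>k. emeasure lborel (H Q \<inter> Bk k) \<le> r * emeasure lborel (Irr \<inter> Bk k)"
  shows "emeasure lborel (Ach Qs m \<inter> Pre m (H Q)) \<le> r * emeasure lborel (Ach Qs m)"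
proof -
  obtain c where sub: "Ach Qs m \<subseteq> Irr" and c: "\<And>S. S \<subseteq> Irr \<Longrightarrow> S \<in> sets borel \<Longrightarrow>
      emeasure lborel (Ach Qs m \<inter> Pre m S) = (\<Sum>k. c k * emeasure lborel (S \<inter> Bk k))"
    using invariant[of Qs m] by blast
  have "emeasure lborel (Ach Qs m \<inter> Pre m (H Q)) = (\<Sum>k. c k * emeasure lborel (H Q \<inter> Bk k))"
    by (rule c) (use H_sub H_meas in auto)
  also have "\<dots> \<le> (\<Sum>k. c k * (r * emeasure lborel (Irr \<inter> Bk k)))"
    by (intro suminf_le mult_left_mono r) auto
  also have "\<dots> = r * (\<Sum>k. c k * emeasure lborel (Irr \<inter> Bk k))"
    by (simp add: mult.left_commute)
  also have "(\<Sum>k. c k * emeasure lborel (Irr \<inter> Bk k)) = emeasure lborel (Ach Qs m \<inter> Pre m Irr)"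
    by (rule c[symmetric]) auto
  also have "Ach Qs m \<inter> Pre m Irr = Ach Qs m" using sub Pre_Irr by auto
  finally show ?thesis .
qed

lemma Ach_True: "Ach (\<lambda>_ _ _. True) m = Irr"
  by (induction m) (auto simp: H_True Pre_Irr)

lemma meas_Irr: "emeasure lborel Irr \<le> 1"
proof -
  have "emeasure lborel Irr \<le> emeasure lborel {0<..<(1::real)}"
    by (rule emeasure_mono) (auto simp: Irr_def)
  then show ?thesis by simp
qed

lemma R_Irr:
  assumes x: "x \<in> Irr"
  shows "sengel_R (Suc (Suc m)) x = real (Kx (sengel_T ((sengel_T ^^ m) x))) / real (Kx ((sengel_T ^^ m) x))"
proof -
  have "sengel_R (Suc (Suc m)) x = sengel_d1 ((sengel_T ^^ Suc m) x) / sengel_d1 ((sengel_T ^^ m) x)"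
    by (simp add: sengel_R_def sengel_d_def)
  also have "\<dots> = (2 * real (Kx (sengel_T ((sengel_T ^^ m) x)))) / (2 * real (Kx ((sengel_T ^^ m) x)))"
    using d1_Irr Tn_Irr[OF x, of m] Tn_Irr[OF x, of "Suc m"] by simp
  finally show ?thesis by simp
qed


lemma R_event:
  assumes x: "x \<in> Irr"
  shows "(sengel_R (Suc (Suc m)) x > t) \<longleftrightarrow> (sengel_T ^^ m) x \<in> H (Qt t)"
proof -
  define y where "y = (sengel_T ^^ m) x"
  have y: "y \<in> Irr" using Tn_Irr[OF x] y_def by simp
  have K: "real (Kx y) > 0" using Irr_Bk(1)[OF y] by simp
  have "sengel_R (Suc (Suc m)) x > t \<longleftrightarrow> real (Kx (sengel_T y)) / real (Kx y) > t"
    using R_Irr[OF x, of m] y_def by simp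
  also have "\<dots> \<longleftrightarrow> t * real (Kx y) < real (Kx (sengel_T y))"
    using K by (simp add: field_simps)
  also have "\<dots> \<longleftrightarrow> y \<in> H (Qt t)" using y by (simp add: H_def Qt_def)
  finally show ?thesis unfolding y_def .
qed

lemma R_pos:
  assumes x: "x \<in> Irr" and n: "n \<ge> 1"
  shows "sengel_R n x > 0"
proof -
  have d: "sengel_d j x > 0" for j
    unfolding sengel_d_def using d1_Irr Tn_Irr[OF x] Irr_Bk(1) by (simp add: Suc_le_eq)
  show ?thesis using d by (simp add: sengel_R_def)
qed



lemma prod_to_0:
  fixes a :: "nat \<Rightarrow> real"
  assumes a0: "\<And>i. 0 \<le> a i" and a1: "\<And>i. a i \<le> 1" and ns: "\<not> summable a"
  shows "(\<lambda>m. \<Prod>i<m. (if N \<le> i then 1 - a i else 1)) \<longlonglongrightarrow> 0"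
proof -
  define c where "c i = (if N \<le> i then a i else 0)" for i
  have c0: "c i \<ge> 0" for i using a0 by (simp add: c_def)
  have e: "(\<Prod>i<m. (if N \<le> i then 1 - a i else 1)) = (\<Prod>i<m. 1 - c i)" for m
    by (intro prod.cong) (auto simp: c_def)
  have nsc: "\<not> summable c"
  proof
    assume "summable c"
    then have "summable (\<lambda>i. c (i + N))" by (rule summable_ignore_initial_segment)
    then have "summable (\<lambda>i. a (i + N))" by (simp add: c_def)
    then have "summable a" by (simp add: summable_iff_shift)
    with ns show False by simp
  qed
  have ub: "\<exists>n. B < (\<Sum>k\<le>n. c k)" for B
  proof (rule ccontr)
    assume "\<not> (\<exists>n. B < (\<Sum>k\<le>n. c k))"
    then have "\<And>n. (\<Sum>k\<le>n. c k) \<le> B" by (simp add: not_less)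
    then have "summable c" by (rule bounded_imp_summable[OF c0])
    with nsc show False by simp
  qed
  have le: "(\<Prod>i<m. 1 - c i) \<le> exp (- (\<Sum>i<m. c i))" for m
  proof -
    have "0 \<le> 1 - c i \<and> 1 - c i \<le> exp (- c i)" for i
    proof
      show "0 \<le> 1 - c i" using a1[of i] by (simp add: c_def)
      show "1 - c i \<le> exp (- c i)" using exp_ge_add_one_self[of "- c i"] by simp
    qed
    then have "(\<Prod>i<m. 1 - c i) \<le> (\<Prod>i<m. exp (- c i))"
      by (intro prod_mono) auto
    also have "\<dots> = exp (- (\<Sum>i<m. c i))" by (simp add: exp_sum[symmetric] sum_negf)
    finally show ?thesis .
  qed
  have p0: "(\<Prod>i<m. 1 - c i) \<ge> 0" for m
    by (intro prod_nonneg) (use a1 in \<open>auto simp: c_def\<close>)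
  show ?thesis unfolding e
  proof (rule LIMSEQ_I)
    fix r :: real assume r: "0 < r"
    obtain n0 where n0: "ln (1 / r) < (\<Sum>k\<le>n0. c k)" using ub by blast
    show "\<exists>no. \<forall>n\<ge>no. norm ((\<Prod>i<n. 1 - c i) - 0) < r"
    proof (intro exI allI impI)
      fix n assume n: "Suc n0 \<le> n"
      have "(\<Sum>k\<le>n0. c k) \<le> (\<Sum>i<n. c i)"
        by (rule sum_mono2) (use n c0 in auto)
      then have "exp (- (\<Sum>i<n. c i)) \<le> exp (- (\<Sum>k\<le>n0. c k))" by simp
      also have "\<dots> < exp (- ln (1 / r))" using n0 by simp
      also have "\<dots> = r" using r by (simp add: ln_div)
      finally show "norm ((\<Prod>i<n. 1 - c i) - 0) < r" using le[of n] p0[of n] by simp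
    qed
  qed
qed

lemma diverge:
  fixes \<phi> :: "nat \<Rightarrow> real"
  assumes pos: "\<And>n. n \<ge> 1 \<Longrightarrow> \<phi> n > 0" and ns: "\<not> summable (\<lambda>n. 1 / \<phi> (Suc n))" and e: "e > 0"
  shows "\<not> summable (\<lambda>m. 1 / (4 * (e * \<phi> (Suc (Suc m)) + 1)))"
proof
  define g where "g = (\<lambda>m. 1 / (4 * (e * \<phi> (Suc (Suc m)) + 1)))"
  assume A: "summable (\<lambda>m. 1 / (4 * (e * \<phi> (Suc (Suc m)) + 1)))"
  have sg: "summable g" unfolding g_def by (rule A)
  then have "g \<longlonglongrightarrow> 0" by (rule summable_LIMSEQ_zero)
  then have "eventually (\<lambda>m. norm (g m) < 1/8) sequentially"
    using tendstoD[OF \<open>g \<longlonglongrightarrow> 0\<close>, of "1/8"] by (simp add: dist_real_def)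
  then have ev: "eventually (\<lambda>m. norm (1 / \<phi> (Suc (Suc m))) \<le> (8 * e) * g m) sequentially"
  proof (rule eventually_mono)
    fix m assume h: "norm (g m) < 1/8"
    have p: "\<phi> (Suc (Suc m)) > 0" using pos by simp
    define y where "y = e * \<phi> (Suc (Suc m))"
    have y0: "y > 0" using p e by (simp add: y_def)
    have "1 / (4 * (y + 1)) < 1/8" using h y0 by (simp add: g_def y_def)
    then have y1: "y > 1" using y0 by (simp add: field_simps)
    have "1 / \<phi> (Suc (Suc m)) = e / y" using e p by (simp add: y_def)
    also have "\<dots> \<le> (8 * e) * (1 / (4 * (y + 1)))"
      using y1 e by (simp add: field_simps)
    finally show "norm (1 / \<phi> (Suc (Suc m))) \<le> (8 * e) * g m" using p by (simp add: g_def y_def)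
  qed
  have "summable (\<lambda>m. 1 / \<phi> (Suc (Suc m)))"
    by (rule summable_comparison_test_ev[OF ev summable_mult[OF sg]])
  then have "summable (\<lambda>n. 1 / \<phi> (Suc n))" by (subst summable_Suc_iff[symmetric])
  with ns show False by simp
qed



lemma Pre_H_meas: "Pre m (H Q) \<in> sets borel"
  by (rule Pre_meas[OF H_sub H_meas])

lemma Pre_sub: "Pre m S \<subseteq> Irr" by (auto simp: Pre_def)

lemma part1_step:
  fixes \<phi> :: "nat \<Rightarrow> real"
  assumes pos: "\<And>n. n \<ge> 1 \<Longrightarrow> \<phi> n > 0" and sm: "summable (\<lambda>n. 1 / \<phi> (Suc n))"
  shows "AE x in lborel. x \<in> Irr \<longrightarrow> eventually (\<lambda>n. sengel_R n x / \<phi> n \<le> 1 / real (Suc M)) sequentially"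
proof -
  define e where "e = real (Suc M)"
  have e0: "e > 0" by (simp add: e_def)
  define t where "t m = \<phi> (Suc (Suc m)) / e" for m
  have p: "\<phi> (Suc (Suc m)) > 0" for m using pos by simp
  have t0: "t m > 0" for m using p e0 by (simp add: t_def)
  define E where "E m = Pre m (H (Qt (t m)))" for m
  have Em[measurable]: "E m \<in> sets lborel" for m using Pre_H_meas by (simp add: E_def)
  have Ele: "emeasure lborel (E m) \<le> ennreal (4 * e / \<phi> (Suc (Suc m)))" for m
  proof -
    have "E m = Ach (\<lambda>_ _ _. True) m \<inter> Pre m (H (Qt (t m)))"
      using Pre_sub by (auto simp: E_def Ach_True)
    also have "emeasure lborel \<dots> \<le> ennreal (4 / t m) * emeasure lborel (Ach (\<lambda>_ _ _. True) m)"
      by (rule chain_step[OF HQt_le[OF t0]])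
    also have "\<dots> \<le> ennreal (4 / t m) * 1"
      unfolding Ach_True by (intro mult_left_mono meas_Irr) auto
    also have "4 / t m = 4 * e / \<phi> (Suc (Suc m))" by (simp add: t_def)
    finally show ?thesis by simp
  qed
  have fin: "emeasure lborel (E m) < \<infinity>" for m
    using Ele[of m] by (simp add: le_less_trans top.not_eq_extremum)
  have mle: "measure lborel (E m) \<le> 4 * e * (1 / \<phi> (Suc (Suc m)))" for m
    unfolding measure_def by (rule enn2real_leI) (use Ele[of m] p[of m] e0 in auto)
  have s2: "summable (\<lambda>m. 1 / \<phi> (Suc (Suc m)))" using sm by (subst summable_Suc_iff)
  have sE: "summable (\<lambda>m. measure lborel (E m))"
    by (rule summable_comparison_test[OF _ summable_mult[OF s2, of "4 * e"]]) (use mle in auto)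
  have ae: "AE x in lborel. eventually (\<lambda>m. x \<in> space lborel - E m) sequentially"
    by (rule borel_cantelli_AE1[OF Em fin sE])
  show ?thesis using ae
  proof (rule eventually_mono)
    fix x assume ev: "eventually (\<lambda>m. x \<in> space lborel - E m) sequentially"
    show "x \<in> Irr \<longrightarrow> eventually (\<lambda>n. sengel_R n x / \<phi> n \<le> 1 / real (Suc M)) sequentially"
    proof
      assume x: "x \<in> Irr"
      from ev obtain N where N: "\<And>m. m \<ge> N \<Longrightarrow> x \<notin> E m" unfolding eventually_sequentially by auto
      show "eventually (\<lambda>n. sengel_R n x / \<phi> n \<le> 1 / real (Suc M)) sequentially"
        unfolding eventually_sequentially
      proof (intro exI allI impI)
        fix n assume n: "Suc (Suc N) \<le> n"
        define m where "m = n - 2"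
        have nm: "n = Suc (Suc m)" using n by (simp add: m_def)
        have "x \<notin> E m" using N n by (simp add: m_def)
        then have "\<not> sengel_R n x > t m" using R_event[OF x, where m=m and t="t m"] x by (simp add: E_def Pre_def nm)
        then have "sengel_R n x \<le> \<phi> n / e" by (simp add: t_def nm)
        then have "sengel_R n x / \<phi> n \<le> (\<phi> n / e) / \<phi> n"
          using p[of m] by (intro divide_right_mono) (auto simp: nm)
        also have "\<dots> = 1 / real (Suc M)" using p[of m] by (simp add: e_def nm)
        finally show "sengel_R n x / \<phi> n \<le> 1 / real (Suc M)" .
      qed
    qed
  qed
qed

lemma part1:
  fixes \<phi> :: "nat \<Rightarrow> real"
  assumes pos: "\<And>n. n \<ge> 1 \<Longrightarrow> \<phi> n > 0" and sm: "summable (\<lambda>n. 1 / \<phi> (Suc n))"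
  shows "AE x in lborel. x \<in> {0<..<1} \<longrightarrow> limsup (\<lambda>n. ereal (sengel_R n x / \<phi> n)) = 0"
proof -
  have A: "AE x in lborel. \<forall>M. x \<in> Irr \<longrightarrow> eventually (\<lambda>n. sengel_R n x / \<phi> n \<le> 1 / real (Suc M)) sequentially"
    unfolding AE_all_countable using part1_step[OF pos sm] by blast
  have B: "AE x in lborel. x \<notin> \<rat>" by (rule AE_not_in[OF Rats_null])
  from A B show ?thesis
  proof eventually_elim
    case (elim x)
    show ?case
    proof
      assume "x \<in> {0<..<1}"
      with elim have x: "x \<in> Irr" by (simp add: Irr_def)
      let ?f = "\<lambda>n. ereal (sengel_R n x / \<phi> n)"
      have up: "limsup ?f \<le> ereal (1 / real (Suc M))" for M
        using elim(1) x by (intro Limsup_bounded) (auto elim: eventually_mono)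
      have lo: "0 \<le> limsup ?f"
      proof (rule le_Limsup)
        show "\<forall>\<^sub>F n in sequentially. 0 \<le> ?f n"
          unfolding eventually_sequentially
          using R_pos[OF x] pos by (intro exI[of _ 1]) (auto intro!: divide_nonneg_pos less_imp_le)
      qed simp
      have "limsup ?f \<le> 0"
      proof (rule ccontr)
        assume "\<not> limsup ?f \<le> 0"
        then have "0 < limsup ?f" by simp
        then obtain r where r: "0 < ereal r" "ereal r < limsup ?f" using ereal_dense2 by blast
        then have "r > 0" by simp
        then obtain M where M: "inverse (real (Suc M)) < r" using reals_Archimedean by blast
        have "limsup ?f \<le> ereal (1 / real (Suc M))" by (rule up)
        also have "\<dots> < ereal r" using M by (simp add: inverse_eq_divide)
        finally show False using r(2) by simp
      qed
      then show "limsup ?f = 0" using lo by simp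
    qed
  qed
qed



lemma part2_step:
  fixes \<phi> :: "nat \<Rightarrow> real"
  assumes pos: "\<And>n. n \<ge> 1 \<Longrightarrow> \<phi> n > 0" and ns: "\<not> summable (\<lambda>n. 1 / \<phi> (Suc n))"
  shows "AE x in lborel. x \<in> Irr \<longrightarrow> (\<exists>m\<ge>N. sengel_R (Suc (Suc m)) x > real (Suc M) * \<phi> (Suc (Suc m)))"
proof -
  define e where "e = real (Suc M)"
  have e0: "e > 0" by (simp add: e_def)
  define t where "t m = e * \<phi> (Suc (Suc m))" for m
  have p: "\<phi> (Suc (Suc m)) > 0" for m using pos by simp
  have t0: "t m > 0" for m using p e0 by (simp add: t_def)
  define a where "a m = 1 / (4 * (t m + 1))" for m
  have a0: "0 \<le> a m" "a m \<le> 1" for m using t0[of m] by (auto simp: a_def field_simps)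
  have nsa: "\<not> summable a"
    unfolding a_def[abs_def] t_def by (rule diverge[OF pos ns e0])
  define Qs where "Qs m = (if N \<le> m then (\<lambda>k j. \<not> Qt (t m) k j) else (\<lambda>_ _. True))" for m
  define b where "b m = (if N \<le> m then 1 - a m else 1)" for m
  have b0: "b m \<ge> 0" for m using a0[of m] by (simp add: b_def)
  have step: "emeasure lborel (H (Qs m) \<inter> Bk k) \<le> ennreal (b m) * emeasure lborel (Irr \<inter> Bk k)" for m k
  proof (cases "N \<le> m")
    case True
    then show ?thesis using HnQt_le[OF t0[of m], of k] by (simp add: Qs_def b_def a_def)
  next
    case False
    then show ?thesis by (simp add: Qs_def b_def H_True)
  qed
  have bound: "emeasure lborel (Ach Qs m) \<le> ennreal (\<Prod>i<m. b i)" for m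
  proof (induction m)
    case 0 then show ?case using meas_Irr by simp
  next
    case (Suc m)
    have "emeasure lborel (Ach Qs (Suc m)) \<le> ennreal (b m) * emeasure lborel (Ach Qs m)"
      unfolding Ach.simps by (rule chain_step[OF step])
    also have "\<dots> \<le> ennreal (b m) * ennreal (\<Prod>i<m. b i)"
      by (intro mult_left_mono Suc.IH) auto
    also have "\<dots> = ennreal (\<Prod>i<Suc m. b i)"
      using b0 by (simp add: ennreal_mult[symmetric] prod_nonneg mult.commute)
    finally show ?case .
  qed
  have lim: "(\<lambda>m. \<Prod>i<m. b i) \<longlonglongrightarrow> 0"
    unfolding b_def by (rule prod_to_0[OF a0 nsa])
  define Z where "Z = (\<Inter>m. Ach Qs m)"
  have Am: "Ach Qs m \<in> sets borel" for m using invariant[of Qs m] by simp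
  have Zm: "Z \<in> sets lborel"
  proof -
    have "(\<Inter>m. Ach Qs m) \<in> sets borel" by (rule sets.countable_INT) (use Am in auto)
    then show ?thesis unfolding Z_def by simp
  qed
  have "emeasure lborel Z \<le> 0"
  proof (rule ennreal_le_epsilon)
    fix r :: real assume r: "0 < r"
    obtain m where m: "norm ((\<Prod>i<m. b i) - 0) < r" using LIMSEQ_D[OF lim r] by blast
    have "emeasure lborel Z \<le> emeasure lborel (Ach Qs m)"
      by (rule emeasure_mono) (use Am in \<open>auto simp: Z_def\<close>)
    also have "\<dots> \<le> ennreal (\<Prod>i<m. b i)" by (rule bound)
    also have "\<dots> \<le> ennreal r" using m by (intro ennreal_leI) simp
    finally show "emeasure lborel Z \<le> 0 + ennreal r" by simp
  qed
  then have "Z \<in> null_sets lborel" using Zm by (simp add: null_sets_def)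
  then have ae: "AE x in lborel. x \<notin> Z" by (rule AE_not_in)
  show ?thesis using ae
  proof (rule eventually_mono)
    fix x assume xZ: "x \<notin> Z"
    show "x \<in> Irr \<longrightarrow> (\<exists>m\<ge>N. sengel_R (Suc (Suc m)) x > real (Suc M) * \<phi> (Suc (Suc m)))"
    proof (rule impI, rule ccontr)
      assume x: "x \<in> Irr" and nex: "\<not> (\<exists>m\<ge>N. sengel_R (Suc (Suc m)) x > real (Suc M) * \<phi> (Suc (Suc m)))"
      have "x \<in> Ach Qs m" for m
      proof (induction m)
        case 0 then show ?case using x by simp
      next
        case (Suc m)
        have "(sengel_T ^^ m) x \<in> H (Qs m)"
        proof (cases "N \<le> m")
          case True
          then have "\<not> sengel_R (Suc (Suc m)) x > t m" using nex by (auto simp: t_def e_def)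
          then have "(sengel_T ^^ m) x \<notin> H (Qt (t m))" using R_event[OF x, where m=m and t="t m"] by simp
          then show ?thesis using True Tn_Irr[OF x, of m] by (simp add: Qs_def H_def)
        next
          case False
          then show ?thesis using Tn_Irr[OF x, of m] by (simp add: Qs_def H_True)
        qed
        then show ?case using Suc.IH x by (simp add: Pre_def)
      qed
      then have "x \<in> Z" by (simp add: Z_def)
      with xZ show False by simp
    qed
  qed
qed

lemma part2:
  fixes \<phi> :: "nat \<Rightarrow> real"
  assumes pos: "\<And>n. n \<ge> 1 \<Longrightarrow> \<phi> n > 0" and ns: "\<not> summable (\<lambda>n. 1 / \<phi> (Suc n))"
  shows "AE x in lborel. x \<in> {0<..<1} \<longrightarrow> limsup (\<lambda>n. ereal (sengel_R n x / \<phi> n)) = \<infinity>"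
proof -
  have A: "AE x in lborel. \<forall>N M. x \<in> Irr \<longrightarrow> (\<exists>m\<ge>N. sengel_R (Suc (Suc m)) x > real (Suc M) * \<phi> (Suc (Suc m)))"
    unfolding AE_all_countable using part2_step[OF pos ns] by blast
  have B: "AE x in lborel. x \<notin> \<rat>" by (rule AE_not_in[OF Rats_null])
  from A B show ?thesis
  proof eventually_elim
    case (elim x)
    show ?case
    proof
      assume "x \<in> {0<..<1}"
      with elim have x: "x \<in> Irr" by (simp add: Irr_def)
      let ?f = "\<lambda>n. ereal (sengel_R n x / \<phi> n)"
      have "(SUP m\<in>{n..}. ?f m) = \<infinity>" for n
      proof (rule SUP_PInfty)
        fix M :: nat
        obtain m where m: "m \<ge> n" "sengel_R (Suc (Suc m)) x > real (Suc M) * \<phi> (Suc (Suc m))"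
          using elim(1) x by blast
        have p: "\<phi> (Suc (Suc m)) > 0" using pos by simp
        have "real M \<le> real (Suc M)" by simp
        also have "real (Suc M) < sengel_R (Suc (Suc m)) x / \<phi> (Suc (Suc m))"
          using m(2) p by (simp add: field_simps)
        finally have "ereal (real M) \<le> ?f (Suc (Suc m))" by simp
        moreover have "Suc (Suc m) \<in> {n..}" using m(1) by simp
        ultimately show "\<exists>i\<in>{n..}. ereal (real M) \<le> ?f i" by blast
      qed
      then show "limsup ?f = \<infinity>" unfolding limsup_INF_SUP by simp
    qed
  qed
qed


theorem corollary1p4:
  fixes \<phi> :: "nat \<Rightarrow> real"
  assumes pos: "\<And>n. n \<ge> 1 \<Longrightarrow> \<phi> n > 0"
  shows "(summable (\<lambda>n. 1 / \<phi> (Suc n)) \<longrightarrow>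
            (AE x in lborel. x \<in> {0<..<1} \<longrightarrow>
               limsup (\<lambda>n. ereal (sengel_R n x / \<phi> n)) = 0))
       \<and> (\<not> summable (\<lambda>n. 1 / \<phi> (Suc n)) \<longrightarrow>
            (AE x in lborel. x \<in> {0<..<1} \<longrightarrow>
               limsup (\<lambda>n. ereal (sengel_R n x / \<phi> n)) = \<infinity>))"
  using part1[of \<phi>, OF pos] part2[of \<phi>, OF pos] by blast

end
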